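(* Consider the client selection problem and the COCS policy described in the context, run with $K(t)=t^{z}\log(t)$ and $h_T=\lceil T^{\gamma}\rceil$, where $0<z<1$ and $0<\gamma<\frac12$. Suppose the Hölder condition holds with constants $L>0,\alpha>0$, and suppose there are a function $H$ with $H(t)>\frac{NMB}{c^{\min}}t^{-z/2}$ and constants $A>0$, $\theta<0$ such that for all $t$, $$2H(t)+\frac{2NMB}{c^{\min}}L2^{\alpha/2}h_T^{-\alpha}\le At^{\theta}.$$ Then $$\mathbb{E}[R_{\text{exploit}}(T)]\le \frac{NMB}{c^{\min}}\Big(\sum_{k=1}^{B/c^{\min}}\binom{N}{k}\Big)\frac{\pi^2}{3}+\frac{3NMB}{c^{\min}}L2^{\alpha/2}T^{1-\gamma\alpha}+\frac{A}{1+\theta}T^{1+\theta},$$ where $c^{\min}=\min_{n,t}c_n(y_n^t)$.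
   Context: Setting. There are $N$ clients indexed by $\mathcal N=\{1,\dots,N\}$, $M$ edge servers (ESs) indexed by $\mathcal M=\{1,\dots,M\}$, and rounds $t=1,\dots,T$. In round $t$, ES $m$ can communicate with a set $\mathcal N_m^t\subseteq\mathcal N$ of clients (these sets may overlap). Each client $n$ reveals computation resources $y_n^t$ and charges a cost $c_n(y_n^t)>0$, with $c_n$ nondecreasing; $c^{\min}=\min_{n,t}c_n(y_n^t)$. Each ES has budget $B>0$. A feasible client selection decision in round $t$ is $\bm s^t=(\bm s_1^t,\dots,\bm s_M^t)$ with $\bm s_m^t\subseteq\mathcal N_m^t$, $\sum_{n\in\bm s_m^t}c_n(y_n^t)\le B$ for every $m$, and $\bm s_m^t\cap\bm s_{m'}^t=\emptyset$ for $m\neq m'$. Each client-ES pair $(n,m)$ with $n\in\mathcal N_m^t$ has an observed context $\phi_{n,m}^t\in\Phi=[0,1]^2$. If client $n$ is selected by ES $m$ in round $t$, its participation indicator $X_{n,m}^t\in\{0,1\}$ is Bernoulli with mean $p_{n,m}(\phi_{n,m}^t)$, where $p_{n,m}:\Phi\to[0,1]$ is unknown. The utility is $\mu(\bm s^t;\bm X^t)=\frac1M\sum_{m\in\mathcal M}\sum_{n\in\bm s_m^t}X_{n,m}^t$ (and $\mu(\bm s;\bm p^t)$ is the same with $p_{n,m}(\phi^t_{n,m})$ in place of $X^t_{n,m}$). The oracle decision $\bm s^{\mathrm{opt},t}$ maximizes $\mu(\bm s;\bm p^t)$ over feasible decisions. The expected regret is $\mathbb E[R(T)]=\sum_{t=1}^T(\mathbb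 E[\mu(\bm s^{\mathrm{opt},t};\bm X^t)]-\mathbb E[\mu(\bm s^t;\bm X^t)])$. Hölder condition: there exist $L>0,\alpha>0$ with $|p_{n,m}(\phi)-p_{n,m}(\phi')|\le L\|\phi-\phi'\|^{\alpha}$ for all $\phi,\phi'\in\Phi$ and all pairs $(n,m)$ (Euclidean norm). COCS policy (inputs: increasing function $K$, integer $h_T$). Partition $\Phi$ into $h_T^2$ squares of side $1/h_T$. For each pair $(n,m)$ and square $l$ keep a counter $C_{n,m}(l)$ (initially $0$) and an estimate $\hat p_{n,m}(l)$ equal to the sample mean of indicators observed when $n$ was selected by $m$ with context in $l$. In round $t$: observe contexts, let $l^t_{n,m}$ be the square containing $\phi^t_{n,m}$, set $\hat X^t_{n,m}=\hat p_{n,m}(l^t_{n,m})$; a pair is under-explored if $C_{n,m}(l^t_{n,m})\le K(t)$. If an under-explored pair exists (exploration round), select a feasible decision that first maximizes the number of selected under-explored clients and then spends remaining per-ES budget on explored clients maximizing $\mu(\cdot;\hat{\bm X}^t)$. Otherwise (exploitation round), select a feasible $\bm s^t$ maximizing $\mu(\bm s;\hat{\bm X}^t)$. At the end of the round, for each selected pair observe $X^t_{n,m}$ and update $\hat p_{n,m}(l^t_{n,m})$ (running mean) and $C_{n,m}(l^t_{n,m})$ (increment). $R_{\text{exploit}}(T)$ is the part of the regret summed over exploitation rounds. *)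

theory Defs
  imports "HOL-Probability.Probability"
begin

(* A client-selection decision: ES m |-> set of clients it selects. *)
type_synonym decision = "nat \<Rightarrow> nat set"

(* Policy state: counters C_{n,m}(l) and running sums of observed indicators
   (the estimate \<hat>p_{n,m}(l) is sum / counter). Squares l are pairs of indices. *)
type_synonym cocs_state = "(nat \<Rightarrow> nat \<Rightarrow> nat \<times> nat \<Rightarrow> nat) \<times> (nat \<Rightarrow> nat \<Rightarrow> nat \<times> nat \<Rightarrow> real)"

(* feasibility of a decision in round t; cost n t = c_n(y_n^t) *)
definition feasible ::
  "nat \<Rightarrow> (nat \<Rightarrow> nat \<Rightarrow> nat set) \<Rightarrow> (nat \<Rightarrow> nat \<Rightarrow> real) \<Rightarrow> real \<Rightarrow> nat \<Rightarrow> decision \<Rightarrow> bool" where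
  "feasible M Nset cost B t s \<longleftrightarrow>
     (\<forall>m. (m \<in> {1..M} \<longrightarrow> s m \<subseteq> Nset m t \<and> (\<Sum>n\<in>s m. cost n t) \<le> B)
          \<and> (m \<notin> {1..M} \<longrightarrow> s m = {}))
   \<and> (\<forall>m\<in>{1..M}. \<forall>m'\<in>{1..M}. m \<noteq> m' \<longrightarrow> s m \<inter> s m' = {})"

definition util :: "nat \<Rightarrow> decision \<Rightarrow> (nat \<Rightarrow> nat \<Rightarrow> real) \<Rightarrow> real" where
  "util M s v = (1 / real M) * (\<Sum>m\<in>{1..M}. \<Sum>n\<in>s m. v n m)"

(* index of the square of side 1/h containing phi in [0,1]^2
   (points on the upper boundary belong to the last square) *)
definition cell :: "nat \<Rightarrow> real \<times> real \<Rightarrow> nat \<times> nat" where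
  "cell h phi = (nat (min (int h - 1) \<lfloor>real h * fst phi\<rfloor>),
                 nat (min (int h - 1) \<lfloor>real h * snd phi\<rfloor>))"

(* sample-mean estimate \<hat>p_{n,m}(l) (0 if no sample yet) *)
definition est_p :: "cocs_state \<Rightarrow> nat \<Rightarrow> nat \<Rightarrow> nat \<times> nat \<Rightarrow> real" where
  "est_p \<sigma> n m l = (if fst \<sigma> n m l = 0 then 0 else snd \<sigma> n m l / real (fst \<sigma> n m l))"

definition cocs_update :: "cocs_state \<Rightarrow> decision \<Rightarrow> (nat \<Rightarrow> nat \<Rightarrow> nat \<times> nat) \<Rightarrow> (nat \<Rightarrow> nat \<Rightarrow> bool) \<Rightarrow> cocs_state" where
  "cocs_update \<sigma> s lc x =
     ((\<lambda>n m l. fst \<sigma> n m l + (if n \<in> s m \<and> lc n m = l then 1 else 0)),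
      (\<lambda>n m l. snd \<sigma> n m l + (if n \<in> s m \<and> lc n m = l \<and> x n m then 1 else 0)))"

(* state after rounds 1..t, for policy decision rule "pick" (round, state before the round),
   squares lc t n m, and realisation X t n m \<omega> of the participation indicators *)
primrec cocs_st ::
  "(nat \<Rightarrow> cocs_state \<Rightarrow> decision) \<Rightarrow> (nat \<Rightarrow> nat \<Rightarrow> nat \<Rightarrow> nat \<times> nat)
   \<Rightarrow> (nat \<Rightarrow> nat \<Rightarrow> nat \<Rightarrow> 'w \<Rightarrow> bool) \<Rightarrow> 'w \<Rightarrow> nat \<Rightarrow> cocs_state" where
  "cocs_st pick lc X \<omega> 0 = ((\<lambda>_ _ _. 0), (\<lambda>_ _ _. 0))"
| "cocs_st pick lc X \<omega> (Suc t) =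
     cocs_update (cocs_st pick lc X \<omega> t) (pick (Suc t) (cocs_st pick lc X \<omega> t))
            (lc (Suc t)) (\<lambda>n m. X (Suc t) n m \<omega>)"

definition cocs_dec ::
  "(nat \<Rightarrow> cocs_state \<Rightarrow> decision) \<Rightarrow> (nat \<Rightarrow> nat \<Rightarrow> nat \<Rightarrow> nat \<times> nat)
   \<Rightarrow> (nat \<Rightarrow> nat \<Rightarrow> nat \<Rightarrow> 'w \<Rightarrow> bool) \<Rightarrow> 'w \<Rightarrow> nat \<Rightarrow> decision" where
  "cocs_dec pick lc X \<omega> t = pick t (cocs_st pick lc X \<omega> (t - 1))"

definition under_explored ::
  "(nat \<Rightarrow> nat \<Rightarrow> nat set) \<Rightarrow> (nat \<Rightarrow> real) \<Rightarrow> (nat \<Rightarrow> nat \<Rightarrow> nat \<Rightarrow> nat \<times> nat)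
   \<Rightarrow> nat \<Rightarrow> cocs_state \<Rightarrow> nat \<Rightarrow> nat \<Rightarrow> bool" where
  "under_explored Nset K lc t \<sigma> n m \<longleftrightarrow> n \<in> Nset m t \<and> real (fst \<sigma> n m (lc t n m)) \<le> K t"

definition exploration_round ::
  "nat \<Rightarrow> (nat \<Rightarrow> nat \<Rightarrow> nat set) \<Rightarrow> (nat \<Rightarrow> real) \<Rightarrow> (nat \<Rightarrow> nat \<Rightarrow> nat \<Rightarrow> nat \<times> nat)
   \<Rightarrow> nat \<Rightarrow> cocs_state \<Rightarrow> bool" where
  "exploration_round M Nset K lc t \<sigma> \<longleftrightarrow>
     (\<exists>m\<in>{1..M}. \<exists>n. under_explored Nset K lc t \<sigma> n m)"

definition num_under ::
  "nat \<Rightarrow> (nat \<Rightarrow> nat \<Rightarrow> nat set) \<Rightarrow> (nat \<Rightarrow> real) \<Rightarrow> (nat \<Rightarrow> nat \<Rightarrow> nat \<Rightarrow> nat \<times> nat)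
   \<Rightarrow> nat \<Rightarrow> cocs_state \<Rightarrow> decision \<Rightarrow> nat" where
  "num_under M Nset K lc t \<sigma> s =
     card {(n, m). m \<in> {1..M} \<and> n \<in> s m \<and> under_explored Nset K lc t \<sigma> n m}"

(* the decision rule "pick" implements COCS: in every round t \<ge> 1 and every state,
   the selected decision is feasible and satisfies the exploration / exploitation rule
   with respect to the estimates \<hat>X^t_{n,m} = \<hat>p_{n,m}(l^t_{n,m}). *)
definition cocs_rule ::
  "nat \<Rightarrow> (nat \<Rightarrow> nat \<Rightarrow> nat set) \<Rightarrow> (nat \<Rightarrow> nat \<Rightarrow> real) \<Rightarrow> real \<Rightarrow> (nat \<Rightarrow> real)
   \<Rightarrow> (nat \<Rightarrow> nat \<Rightarrow> nat \<Rightarrow> nat \<times> nat) \<Rightarrow> (nat \<Rightarrow> cocs_state \<Rightarrow> decision) \<Rightarrow> bool" where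
  "cocs_rule M Nset cost B K lc pick \<longleftrightarrow>
    (\<forall>t\<ge>1. \<forall>\<sigma>.
      let s = pick t \<sigma>;
          Xh = (\<lambda>n m. est_p \<sigma> n m (lc t n m));
          U = under_explored Nset K lc t \<sigma>
      in feasible M Nset cost B t s \<and>
         (if exploration_round M Nset K lc t \<sigma> then
            (\<forall>s'. feasible M Nset cost B t s' \<longrightarrow>
                   num_under M Nset K lc t \<sigma> s' \<le> num_under M Nset K lc t \<sigma> s) \<and>
            (\<forall>s'. feasible M Nset cost B t s' \<and>
                   (\<forall>m\<in>{1..M}. {n \<in> s' m. U n m} = {n \<in> s m. U n m}) \<longrightarrow>
                   util M s' Xh \<le> util M s Xh)
          else
            (\<forall>s'. feasible M Nset cost B t s' \<longrightarrow> util M s' Xh \<le> util M s Xh)))"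

definition R_exploit ::
  "nat \<Rightarrow> (nat \<Rightarrow> nat \<Rightarrow> nat set) \<Rightarrow> (nat \<Rightarrow> real) \<Rightarrow> (nat \<Rightarrow> nat \<Rightarrow> nat \<Rightarrow> nat \<times> nat)
   \<Rightarrow> (nat \<Rightarrow> cocs_state \<Rightarrow> decision) \<Rightarrow> (nat \<Rightarrow> decision)
   \<Rightarrow> (nat \<Rightarrow> nat \<Rightarrow> nat \<Rightarrow> 'w \<Rightarrow> bool) \<Rightarrow> nat \<Rightarrow> 'w \<Rightarrow> real" where
  "R_exploit M Nset K lc pick sopt X T \<omega> =
     (\<Sum>t\<in>{1..T}.
        if exploration_round M Nset K lc t (cocs_st pick lc X \<omega> (t - 1)) then 0
        else util M (sopt t) (\<lambda>n m. of_bool (X t n m \<omega>))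
           - util M (cocs_dec pick lc X \<omega> t) (\<lambda>n m. of_bool (X t n m \<omega>)))"

end

theory Submission
  imports Defs
begin

definition wt :: "'i set \<Rightarrow> ('i \<Rightarrow> real) \<Rightarrow> 'i set \<Rightarrow> real" where
  "wt I q S = (\<Prod>j\<in>S. q j) * (\<Prod>j\<in>I - S. 1 - q j)"

definition Ex :: "'i set \<Rightarrow> ('i \<Rightarrow> real) \<Rightarrow> ('i set \<Rightarrow> real) \<Rightarrow> real" where
  "Ex I q f = (\<Sum>S\<in>Pow I. wt I q S * f S)"

lemma wt_nonneg:
  assumes "\<And>i. i \<in> I \<Longrightarrow> 0 \<le> q i \<and> q i \<le> 1" "S \<subseteq> I"
  shows "0 \<le> wt I q S"
  unfolding wt_def using assms
  by (intro mult_nonneg_nonneg prod_nonneg) auto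

lemma Ex_const:
  assumes "finite I"
  shows "Ex I q (\<lambda>_. c) = c"
proof -
  have "(\<Sum>S\<in>Pow I. wt I q S) = (\<Prod>x\<in>I. q x + (1 - q x))"
    unfolding wt_def using prod_add[OF assms, of q "\<lambda>x. 1 - q x"] by simp
  also have "\<dots> = 1" by simp
  finally show ?thesis unfolding Ex_def by (simp add: sum_distrib_right[symmetric])
qed

lemma Ex_add: "Ex I q (\<lambda>S. f S + g S) = Ex I q f + Ex I q g"
  unfolding Ex_def by (simp add: distrib_left sum.distrib)

lemma Ex_diff: "Ex I q (\<lambda>S. f S - g S) = Ex I q f - Ex I q g"
  unfolding Ex_def by (simp add: right_diff_distrib sum_subtractf)

lemma Ex_scale: "Ex I q (\<lambda>S. c * f S) = c * Ex I q f"
  unfolding Ex_def by (simp add: sum_distrib_left mult.left_commute)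

lemma Ex_sum: "Ex I q (\<lambda>S. \<Sum>k\<in>A. f k S) = (\<Sum>k\<in>A. Ex I q (f k))"
  unfolding Ex_def by (simp add: sum_distrib_left sum.swap[of _ A])

lemma Ex_mono:
  assumes "\<And>i. i \<in> I \<Longrightarrow> 0 \<le> q i \<and> q i \<le> 1" "\<And>S. S \<subseteq> I \<Longrightarrow> f S \<le> g S"
  shows "Ex I q f \<le> Ex I q g"
  unfolding Ex_def
  by (intro sum_mono mult_left_mono) (use assms in \<open>auto intro: wt_nonneg\<close>)

lemma Ex_insert:
  assumes fin: "finite I'" and iI: "i \<notin> I'"
    and f: "\<And>S. S \<subseteq> I' \<Longrightarrow> f (insert i S) = f S"
  shows "Ex (insert i I') q f = Ex I' q f"
    and "Ex (insert i I') q (\<lambda>S. f S * of_bool (i \<in> S)) = q i * Ex I' q f"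
proof -
  have P: "Pow (insert i I') = Pow I' \<union> insert i ` Pow I'" by (rule Pow_insert)
  have disj: "Pow I' \<inter> insert i ` Pow I' = {}" using iI by auto
  have inj: "inj_on (insert i) (Pow I')" using iI unfolding inj_on_def by auto
  have w0: "wt (insert i I') q S = (1 - q i) * wt I' q S" if "S \<subseteq> I'" for S
  proof -
    have "insert i I' - S = insert i (I' - S)" using that iI by auto
    then show ?thesis unfolding wt_def using fin iI by (simp add: prod.insert)
  qed
  have w1: "wt (insert i I') q (insert i S) = q i * wt I' q S" if "S \<subseteq> I'" for S
  proof -
    have "insert i I' - insert i S = I' - S" using that iI by auto
    moreover have "finite S" "i \<notin> S" using that fin iI finite_subset by auto
    ultimately show ?thesis unfolding wt_def by (simp add: prod.insert)
  qed
  have fS: "finite (Pow I')" using fin by simp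
  have split: "Ex (insert i I') q g = (\<Sum>S\<in>Pow I'. wt (insert i I') q S * g S)
       + (\<Sum>S\<in>Pow I'. wt (insert i I') q (insert i S) * g (insert i S))" for g
    unfolding Ex_def P using fS disj inj
    by (simp add: sum.union_disjoint sum.reindex)
  have "Ex (insert i I') q f = (\<Sum>S\<in>Pow I'. (1 - q i) * wt I' q S * f S)
       + (\<Sum>S\<in>Pow I'. q i * wt I' q S * f S)"
    unfolding split by (intro arg_cong2[where f="(+)"] sum.cong) (auto simp: w0 w1 f)
  also have "\<dots> = Ex I' q f"
    unfolding Ex_def by (simp add: sum.distrib[symmetric] algebra_simps)
  finally show "Ex (insert i I') q f = Ex I' q f" .
  have "Ex (insert i I') q (\<lambda>S. f S * of_bool (i \<in> S)) = (\<Sum>S\<in>Pow I'. q i * wt I' q S * f S)"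
    unfolding split using iI
    by (auto simp: w0 w1 f intro!: sum.neutral)
  also have "\<dots> = q i * Ex I' q f"
    unfolding Ex_def by (simp add: sum_distrib_left mult.assoc)
  finally show "Ex (insert i I') q (\<lambda>S. f S * of_bool (i \<in> S)) = q i * Ex I' q f" .
qed

lemma Ex_indep:
  assumes fin: "finite I" and iI: "i \<in> I" and iD: "i \<notin> D"
    and dep: "\<And>S. f S = f (S \<inter> D)"
  shows "Ex I q (\<lambda>S. f S * of_bool (i \<in> S)) = q i * Ex I q f"
proof -
  define I' where "I' = I - {i}"
  have I: "I = insert i I'" "i \<notin> I'" "finite I'" using iI fin by (auto simp: I'_def)
  have f: "f (insert i S) = f S" for S
    using dep[of "insert i S"] dep[of S] iD by simp
  show ?thesis unfolding I(1) using Ex_insert[OF I(3) I(2), of f q] f by simp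
qed

lemma bridge:
  fixes P :: "'w measure" and Xv :: "'i \<Rightarrow> 'w \<Rightarrow> bool"
  assumes ps: "prob_space P"
    and ind: "prob_space.indep_vars P (\<lambda>_. count_space UNIV) Xv Iall"
    and sub: "I \<subseteq> Iall" and fin: "finite I"
    and meas: "\<And>i. i \<in> I \<Longrightarrow> Xv i \<in> measurable P (count_space UNIV)"
    and qd: "\<And>i. i \<in> I \<Longrightarrow> measure P {\<omega> \<in> space P. Xv i \<omega>} = q i"
  shows "integral\<^sup>L P (\<lambda>\<omega>. g {i\<in>I. Xv i \<omega>}) = Ex I q g"
proof -
  interpret prob_space P by (rule ps)
  define E where "E S = {\<omega>\<in>space P. {i\<in>I. Xv i \<omega>} = S}" for S
  have pre: "Xv i -` A \<inter> space P \<in> sets P" if "i \<in> I" for i A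
    using measurable_sets[OF meas[OF that], of A] by simp
  have Eeq: "E S = (\<Inter>i\<in>I. Xv i -` {i \<in> S} \<inter> space P)" if "S \<subseteq> I" "I \<noteq> {}" for S
    unfolding E_def using that by auto
  have Esets: "E S \<in> sets P" for S
  proof (cases "S \<subseteq> I \<and> I \<noteq> {}")
    case True
    then show ?thesis unfolding Eeq[OF conjunct1[OF True] conjunct2[OF True]]
      using fin pre by (intro sets.finite_INT) auto
  next
    case False
    then consider "\<not> S \<subseteq> I" | "I = {}" by blast
    then show ?thesis
    proof cases
      case 1 then have "E S = {}" unfolding E_def by auto
      then show ?thesis by simp
    next
      case 2 then have "E S = (if S = {} then space P else {})" unfolding E_def by auto
      then show ?thesis by simp
    qed
  qed
  have pb: "prob (Xv i -` {b} \<inter> space P) = (if b then q i else 1 - q i)" if "i \<in> I" for i b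
  proof -
    have e: "Xv i -` {True} \<inter> space P = {\<omega> \<in> space P. Xv i \<omega>}" by auto
    have "Xv i -` {False} \<inter> space P = space P - {\<omega> \<in> space P. Xv i \<omega>}" by auto
    then have "prob (Xv i -` {False} \<inter> space P) = 1 - q i"
      using prob_compl[of "{\<omega> \<in> space P. Xv i \<omega>}"] pre[OF that, of "{True}"] e qd[OF that] by simp
    then show ?thesis using e qd[OF that] by (cases b) auto
  qed
  have probE: "prob (E S) = wt I q S" if "S \<subseteq> I" for S
  proof (cases "I = {}")
    case True
    then have "E S = space P" "S = {}" using that unfolding E_def by auto
    then show ?thesis using True by (simp add: wt_def prob_space)
  next
    case False
    have "prob (E S) = (\<Prod>i\<in>I. prob (Xv i -` {i \<in> S} \<inter> space P))"
      unfolding Eeq[OF that False]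
      by (rule indep_varsD[OF ind False fin sub]) auto
    also have "\<dots> = (\<Prod>i\<in>I. if i \<in> S then q i else 1 - q i)"
      by (intro prod.cong) (auto simp: pb)
    also have "\<dots> = wt I q S"
      unfolding wt_def using fin that
      by (simp add: prod.If_cases Int_absorb1 Diff_eq)
    finally show ?thesis .
  qed
  have pt: "g {i\<in>I. Xv i \<omega>} = (\<Sum>S\<in>Pow I. g S * indicator (E S) \<omega>)" if "\<omega> \<in> space P" for \<omega>
  proof -
    have "(\<Sum>S\<in>Pow I. g S * indicator (E S) \<omega>) = (\<Sum>S\<in>{{i\<in>I. Xv i \<omega>}}. g S * indicator (E S) \<omega>)"
      using fin by (intro sum.mono_neutral_right) (auto simp: E_def that indicator_def split: if_splits)
    then show ?thesis using that by (simp add: E_def)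
  qed
  have "integral\<^sup>L P (\<lambda>\<omega>. g {i\<in>I. Xv i \<omega>}) = integral\<^sup>L P (\<lambda>\<omega>. \<Sum>S\<in>Pow I. g S * indicator (E S) \<omega>)"
    apply (rule Bochner_Integration.integral_cong[OF refl])
    using pt by blast
  also have "\<dots> = (\<Sum>S\<in>Pow I. g S * prob (E S))"
  proof -
    have "integral\<^sup>L P (\<lambda>\<omega>. \<Sum>S\<in>Pow I. g S * indicator (E S) \<omega>)
       = (\<Sum>S\<in>Pow I. integral\<^sup>L P (\<lambda>\<omega>. g S * indicator (E S) \<omega>))"
      by (rule Bochner_Integration.integral_sum) (auto simp: Esets top.not_eq_extremum[symmetric] emeasure_finite intro!: integrable_real_indicator)
    also have "\<dots> = (\<Sum>S\<in>Pow I. g S * prob (E S))"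
      using Esets sets.sets_into_space by (intro sum.cong refl) (simp add: Int_absorb2)
    finally show ?thesis .
  qed
  also have "\<dots> = Ex I q g"
    unfolding Ex_def by (intro sum.cong) (auto simp: probE)
  finally show ?thesis .
qed

lemma powr_step:
  fixes T :: real and \<theta> :: real
  assumes T: "T \<ge> 1" and th: "-1 < \<theta>" "\<theta> < 0"
  shows "(T + 1) powr \<theta> \<le> ((T + 1) powr (1 + \<theta>) - T powr (1 + \<theta>)) / (1 + \<theta>)"
proof -
  have "\<exists>z. T < z \<and> z < T + 1 \<and> (T + 1) powr (1 + \<theta>) - T powr (1 + \<theta>) = (T + 1 - T) * ((1 + \<theta>) * z powr (1 + \<theta> - 1))"
    apply (rule MVT2)
     apply simp
    apply (rule has_real_derivative_powr)
    using T by linarith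
  then obtain z where z: "T < z" "z < T + 1" "(T + 1) powr (1 + \<theta>) - T powr (1 + \<theta>) = (1 + \<theta>) * z powr \<theta>"
    by auto
  have "(T + 1) powr \<theta> \<le> z powr \<theta>" using z T th by (intro powr_mono2') auto
  then have "(1 + \<theta>) * (T + 1) powr \<theta> \<le> (1 + \<theta>) * z powr \<theta>"
    using th by (intro mult_left_mono) auto
  then show ?thesis using z th by (simp add: le_divide_eq mult.commute)
qed

lemma sum_powr_le:
  fixes \<theta> :: real
  assumes th: "-1 < \<theta>" "\<theta> < 0"
  shows "(\<Sum>t = 1..T. real t powr \<theta>) \<le> real T powr (1 + \<theta>) / (1 + \<theta>)"
proof (induction T)
  case 0
  then show ?case by simp
next
  case (Suc T)
  show ?case
  proof (cases "T = 0")
    case True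
    then show ?thesis using th by (simp add: field_simps)
  next
    case False
    have "(\<Sum>t = 1..Suc T. real t powr \<theta>) = (\<Sum>t = 1..T. real t powr \<theta>) + real (Suc T) powr \<theta>"
      by simp
    also have "\<dots> \<le> real T powr (1 + \<theta>) / (1 + \<theta>) + ((real T + 1) powr (1 + \<theta>) - real T powr (1 + \<theta>)) / (1 + \<theta>)"
      using Suc.IH powr_step[of "real T" \<theta>] False th by (simp add: add.commute)
    also have "\<dots> = (real T powr (1 + \<theta>) + ((real T + 1) powr (1 + \<theta>) - real T powr (1 + \<theta>))) / (1 + \<theta>)"
      by (simp only: add_divide_distrib)
    also have "\<dots> = real (Suc T) powr (1 + \<theta>) / (1 + \<theta>)"
      by (simp add: add.commute)
    finally show ?thesis .
  qed
qed

lemma cell_coord: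
  fixes h :: nat and x :: real
  assumes h: "h \<ge> 1" and x: "0 \<le> x" "x \<le> 1"
  defines "k \<equiv> min (int h - 1) \<lfloor>real h * x\<rfloor>"
  shows "0 \<le> k" "real_of_int k / h \<le> x" "x \<le> (real_of_int k + 1) / h"
proof -
  have hp: "real h > 0" using h by simp
  show "0 \<le> k" unfolding k_def using h x by auto
  show "real_of_int k / h \<le> x"
  proof -
    have "k \<le> \<lfloor>real h * x\<rfloor>" unfolding k_def by simp
    then have "real_of_int k \<le> real_of_int \<lfloor>real h * x\<rfloor>" by simp
    also have "\<dots> \<le> real h * x" by (rule of_int_floor_le)
    finally have "real_of_int k \<le> real h * x" .
    then show ?thesis using hp by (simp add: field_simps mult.commute)
  qed
  show "x \<le> (real_of_int k + 1) / h"
  proof (cases "\<lfloor>real h * x\<rfloor> \<le> int h - 1")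
    case True
    then have "k = \<lfloor>real h * x\<rfloor>" unfolding k_def by simp
    then have "real h * x \<le> real_of_int k + 1" by linarith
    then show ?thesis using hp by (simp add: field_simps mult.commute)
  next
    case False
    then have "k = int h - 1" unfolding k_def by simp
    then have "real_of_int k + 1 = real h" by simp
    then show ?thesis using x hp by simp
  qed
qed

lemma cell_close:
  fixes h :: nat and v w :: "real \<times> real"
  assumes h: "h \<ge> 1" and v: "v \<in> {0..1} \<times> {0..1}" and w: "w \<in> {0..1} \<times> {0..1}"
    and eq: "cell h v = cell h w"
  shows "norm (v - w) \<le> sqrt 2 / real h"
proof -
  have hp: "real h > 0" using h by simp
  have coord: "\<bar>x - y\<bar> \<le> 1 / real h"
    if "0 \<le> x" "x \<le> 1" "0 \<le> y" "y \<le> 1"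
       "nat (min (int h - 1) \<lfloor>real h * x\<rfloor>) = nat (min (int h - 1) \<lfloor>real h * y\<rfloor>)" for x y
  proof -
    note a = cell_coord[OF h that(1,2)] and b = cell_coord[OF h that(3,4)]
    have "min (int h - 1) \<lfloor>real h * x\<rfloor> = min (int h - 1) \<lfloor>real h * y\<rfloor>"
      using that(5) a(1) b(1) by (simp add: eq_nat_nat_iff)
    then obtain kk where kx: "real_of_int (min (int h - 1) \<lfloor>real h * x\<rfloor>) = kk"
      and ky: "real_of_int (min (int h - 1) \<lfloor>real h * y\<rfloor>) = kk" by auto
    have x1: "kk \<le> real h * x" "real h * x \<le> kk + 1"
      using a(2,3) hp unfolding kx by (simp_all add: divide_le_eq le_divide_eq mult.commute)
    have y1: "kk \<le> real h * y" "real h * y \<le> kk + 1"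
      using b(2,3) hp unfolding ky by (simp_all add: divide_le_eq le_divide_eq mult.commute)
    have "\<bar>real h * x - real h * y\<bar> \<le> 1" using x1 y1 by linarith
    then have "real h * \<bar>x - y\<bar> \<le> 1" by (simp add: right_diff_distrib[symmetric] abs_mult)
    then show ?thesis using hp by (simp add: le_divide_eq mult.commute)
  qed
  obtain a b c d where vw: "v = (a, b)" "w = (c, d)" by (cases v, cases w) auto
  have ac: "\<bar>a - c\<bar> \<le> 1 / real h" using v w eq coord[of a c] unfolding vw cell_def by auto
  have bd: "\<bar>b - d\<bar> \<le> 1 / real h" using v w eq coord[of b d] unfolding vw cell_def by auto
  have "norm (v - w) = sqrt ((a - c)\<^sup>2 + (b - d)\<^sup>2)"
    unfolding vw by (simp add: norm_Pair)
  also have "\<dots> \<le> sqrt ((1 / real h)\<^sup>2 + (1 / real h)\<^sup>2)"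
      proof -
    have "(a - c)\<^sup>2 \<le> (1 / real h)\<^sup>2" using ac by (metis abs_ge_zero power2_abs power_mono)
    moreover have "(b - d)\<^sup>2 \<le> (1 / real h)\<^sup>2" using bd by (metis abs_ge_zero power2_abs power_mono)
    ultimately show ?thesis by simp
  qed
  also have "\<dots> = sqrt 2 / real h"
    using hp by (simp add: real_sqrt_mult real_sqrt_divide)
  finally show ?thesis .
qed

lemma util_expand:
  assumes fin: "\<And>m. m \<in> {1..M} \<Longrightarrow> finite (A m)" and sub: "\<And>m. m \<in> {1..M} \<Longrightarrow> s m \<subseteq> A m"
  shows "util M s v = (1 / real M) * (\<Sum>m\<in>{1..M}. \<Sum>n\<in>A m. of_bool (n \<in> s m) * v n m)"
proof -
  have "(\<Sum>n\<in>s m. v n m) = (\<Sum>n\<in>A m. of_bool (n \<in> s m) * v n m)" if "m \<in> {1..M}" for m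
  proof -
    have "s m = A m \<inter> s m" using sub[OF that] by auto
    then have "(\<Sum>n\<in>s m. v n m) = (\<Sum>n\<in>A m \<inter> s m. v n m)" by simp
    also have "\<dots> = (\<Sum>n\<in>A m. if n \<in> s m then v n m else 0)"
      by (rule sum.inter_restrict[OF fin[OF that]])
    also have "\<dots> = (\<Sum>n\<in>A m. of_bool (n \<in> s m) * v n m)" by (rule sum.cong) auto
    finally show ?thesis .
  qed
  then have "(\<Sum>m\<in>{1..M}. \<Sum>n\<in>s m. v n m) = (\<Sum>m\<in>{1..M}. \<Sum>n\<in>A m. of_bool (n \<in> s m) * v n m)"
    by (rule sum.cong[OF refl])
  then show ?thesis unfolding util_def by simp
qed

lemma symdiff_le:
  fixes g :: "'a \<Rightarrow> real"
  assumes "finite U" "A \<subseteq> U" "B \<subseteq> U"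
  shows "sum g A - sum g B \<le> sum (\<lambda>x. \<bar>g x\<bar>) U"
proof -
  have fA: "finite A" and fB: "finite B" using assms finite_subset by auto
  have "sum g A = sum g (A \<inter> B) + sum g (A - B)" using fA by (rule sum.Int_Diff)
  moreover have "sum g B = sum g (B \<inter> A) + sum g (B - A)" using fB by (rule sum.Int_Diff)
  ultimately have "sum g A - sum g B = sum g (A - B) - sum g (B - A)" by (simp add: Int_commute)
  also have "\<dots> \<le> sum (\<lambda>x. \<bar>g x\<bar>) (A - B) + sum (\<lambda>x. \<bar>g x\<bar>) (B - A)"
  proof -
    have "sum g (A - B) \<le> sum (\<lambda>x. \<bar>g x\<bar>) (A - B)" by (rule sum_mono) simp
    moreover have "sum (\<lambda>x. - g x) (B - A) \<le> sum (\<lambda>x. \<bar>g x\<bar>) (B - A)" by (rule sum_mono) simp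
    ultimately show ?thesis by (simp add: sum_negf)
  qed
  also have "\<dots> = sum (\<lambda>x. \<bar>g x\<bar>) ((A - B) \<union> (B - A))"
    using fA fB by (subst sum.union_disjoint) auto
  also have "\<dots> \<le> sum (\<lambda>x. \<bar>g x\<bar>) U"
    using assms by (intro sum_mono2) auto
  finally show ?thesis .
qed

locale cocs_proc =
  fixes M N T :: nat and Nset :: "nat \<Rightarrow> nat \<Rightarrow> nat set" and cost :: "nat \<Rightarrow> nat \<Rightarrow> real"
    and B :: real and K :: "nat \<Rightarrow> real" and lc :: "nat \<Rightarrow> nat \<Rightarrow> nat \<Rightarrow> nat \<times> nat"
    and pick :: "nat \<Rightarrow> cocs_state \<Rightarrow> decision" and q :: "nat \<Rightarrow> nat \<Rightarrow> nat \<Rightarrow> real"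
  assumes policy: "cocs_rule M Nset cost B K lc pick"
    and Nset_sub: "\<And>m t. Nset m t \<subseteq> {1..N}"
    and q_range: "\<And>t n m. t \<in> {1..T} \<Longrightarrow> m \<in> {1..M} \<Longrightarrow> n \<in> Nset m t \<Longrightarrow> 0 \<le> q t n m \<and> q t n m \<le> 1"
begin

lemma Nset_fin: "finite (Nset m t)"
  using Nset_sub finite_subset by blast

lemma pick_rule:
  assumes "t \<ge> 1"
  shows "let s = pick t \<sigma>;
          Xh = (\<lambda>n m. est_p \<sigma> n m (lc t n m));
          U = under_explored Nset K lc t \<sigma>
      in feasible M Nset cost B t s \<and>
         (if exploration_round M Nset K lc t \<sigma> then
            (\<forall>s'. feasible M Nset cost B t s' \<longrightarrow>
                   num_under M Nset K lc t \<sigma> s' \<le> num_under M Nset K lc t \<sigma> s) \<and>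
            (\<forall>s'. feasible M Nset cost B t s' \<and>
                   (\<forall>m\<in>{1..M}. {n \<in> s' m. U n m} = {n \<in> s m. U n m}) \<longrightarrow>
                   util M s' Xh \<le> util M s Xh)
          else
            (\<forall>s'. feasible M Nset cost B t s' \<longrightarrow> util M s' Xh \<le> util M s Xh))"
  using policy assms unfolding cocs_rule_def by blast

lemma pick_feasible: "t \<ge> 1 \<Longrightarrow> feasible M Nset cost B t (pick t \<sigma>)"
  using pick_rule[of t \<sigma>] unfolding Let_def by (simp split: if_splits)

lemma pick_exploit:
  "t \<ge> 1 \<Longrightarrow> \<not> exploration_round M Nset K lc t \<sigma> \<Longrightarrow> feasible M Nset cost B t s'
   \<Longrightarrow> util M s' (\<lambda>n m. est_p \<sigma> n m (lc t n m)) \<le> util M (pick t \<sigma>) (\<lambda>n m. est_p \<sigma> n m (lc t n m))"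
  using pick_rule[of t \<sigma>] unfolding Let_def by simp

lemma pick_sub: "t \<ge> 1 \<Longrightarrow> m \<in> {1..M} \<Longrightarrow> pick t \<sigma> m \<subseteq> Nset m t"
  using pick_feasible[of t \<sigma>] unfolding feasible_def by blast

lemma pick_out: "t \<ge> 1 \<Longrightarrow> m \<notin> {1..M} \<Longrightarrow> pick t \<sigma> m = {}"
  using pick_feasible[of t \<sigma>] unfolding feasible_def by blast

lemma st_cong:
  assumes "\<And>t n m. t \<in> {1..r} \<Longrightarrow> m \<in> {1..M} \<Longrightarrow> n \<in> Nset m t \<Longrightarrow> X t n m \<omega> = X' t n m \<omega>'"
  shows "cocs_st pick lc X \<omega> r = cocs_st pick lc X' \<omega>' r"
  using assms
proof (induction r)
  case 0
  then show ?case by simp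
next
  case (Suc r)
  have IH: "cocs_st pick lc X \<omega> r = cocs_st pick lc X' \<omega>' r"
    using Suc.prems by (intro Suc.IH) auto
  define \<sigma> where "\<sigma> = cocs_st pick lc X' \<omega>' r"
  define s where "s = pick (Suc r) \<sigma>"
  have agree: "(n \<in> s m \<and> lc (Suc r) n m = l \<and> X (Suc r) n m \<omega>) \<longleftrightarrow> (n \<in> s m \<and> lc (Suc r) n m = l \<and> X' (Suc r) n m \<omega>')" for n m l
  proof (cases "n \<in> s m")
    case True
    then have "m \<in> {1..M}" using pick_out[of "Suc r" m \<sigma>] unfolding s_def by auto
    moreover have "n \<in> Nset m (Suc r)" using True pick_sub[of "Suc r" m \<sigma>] calculation unfolding s_def by auto
    ultimately show ?thesis using Suc.prems[of "Suc r" m n] by auto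
  qed simp
  show ?case
    unfolding cocs_st.simps IH \<sigma>_def[symmetric] s_def[symmetric] cocs_update_def
    by (simp only: agree)
qed

definition Xp :: "(nat \<times> nat \<times> nat) set \<Rightarrow> nat \<Rightarrow> nat \<Rightarrow> nat \<Rightarrow> unit \<Rightarrow> bool" where
  "Xp S = (\<lambda>t n m _. (t, n, m) \<in> S)"

definition st :: "(nat \<times> nat \<times> nat) set \<Rightarrow> nat \<Rightarrow> cocs_state" where
  "st S r = cocs_st pick lc (Xp S) () r"

definition dec :: "(nat \<times> nat \<times> nat) set \<Rightarrow> nat \<Rightarrow> decision" where
  "dec S t = pick t (st S (t - 1))"

definition Dlt :: "nat \<Rightarrow> (nat \<times> nat \<times> nat) set" where
  "Dlt r = {(j, a, b). j < r}"

lemma st_dep: "j < r \<Longrightarrow> st S j = st (S \<inter> Dlt r) j"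
  unfolding st_def by (rule st_cong) (auto simp: Xp_def Dlt_def)

lemma dec_dep: "j \<le> r \<Longrightarrow> dec S j = dec (S \<inter> Dlt r) j"
proof (cases j)
  case 0
  then show ?thesis by (simp add: dec_def st_def)
next
  case (Suc k)
  assume "j \<le> r"
  then show ?thesis unfolding dec_def using st_dep[of k r S] Suc by simp
qed

lemma st_Suc: "st S (Suc r) = cocs_update (st S r) (dec S (Suc r)) (lc (Suc r)) (\<lambda>n m. (Suc r, n, m) \<in> S)"
  unfolding st_def dec_def by (simp add: Xp_def)

lemma dec_sub: "t \<ge> 1 \<Longrightarrow> m \<in> {1..M} \<Longrightarrow> dec S t m \<subseteq> Nset m t"
  unfolding dec_def by (rule pick_sub)

lemma dec_out: "t \<ge> 1 \<Longrightarrow> m \<notin> {1..M} \<Longrightarrow> dec S t m = {}"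
  unfolding dec_def by (rule pick_out)

definition I :: "(nat \<times> nat \<times> nat) set" where
  "I = {(t, n, m). t \<in> {1..T} \<and> m \<in> {1..M} \<and> n \<in> Nset m t}"

definition Q :: "nat \<times> nat \<times> nat \<Rightarrow> real" where
  "Q i = (case i of (t, n, m) \<Rightarrow> q t n m)"

lemma I_fin: "finite I"
proof -
  have "I \<subseteq> {1..T} \<times> {1..N} \<times> {1..M}" unfolding I_def using Nset_sub by auto
  then show ?thesis by (rule finite_subset) auto
qed

lemma Q_range: "i \<in> I \<Longrightarrow> 0 \<le> Q i \<and> Q i \<le> 1"
  unfolding I_def Q_def using q_range by auto

lemma Ex_mono': "(\<And>S. S \<subseteq> I \<Longrightarrow> f S \<le> g S) \<Longrightarrow> Ex I Q f \<le> Ex I Q g"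
  by (rule Ex_mono) (use Q_range in auto)

lemma Ex_util:
  assumes t: "t \<in> {1..T}"
    and fdep: "\<And>S. f S = f (S \<inter> Dlt t)" and sdep: "\<And>S. s S = s (S \<inter> Dlt t)"
    and ssub: "\<And>S m. m \<in> {1..M} \<Longrightarrow> s S m \<subseteq> Nset m t"
  shows "Ex I Q (\<lambda>S. f S * util M (s S) (\<lambda>n m. of_bool ((t, n, m) \<in> S)))
       = Ex I Q (\<lambda>S. f S * util M (s S) (\<lambda>n m. q t n m))"
proof -
  have e: "f S * util M (s S) v = (1 / real M) * (\<Sum>m\<in>{1..M}. \<Sum>n\<in>Nset m t. (f S * of_bool (n \<in> s S m)) * v n m)" for S v
  proof -
    have "util M (s S) v = (1 / real M) * (\<Sum>m\<in>{1..M}. \<Sum>n\<in>Nset m t. of_bool (n \<in> s S m) * v n m)"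
      by (rule util_expand) (auto simp: Nset_fin ssub)
    then show ?thesis by (simp add: sum_distrib_left mult.assoc mult.left_commute)
  qed
  have key: "Ex I Q (\<lambda>S. (f S * of_bool (n \<in> s S m)) * of_bool ((t, n, m) \<in> S))
           = Ex I Q (\<lambda>S. (f S * of_bool (n \<in> s S m)) * q t n m)"
    if "m \<in> {1..M}" "n \<in> Nset m t" for n m
  proof -
    have "Ex I Q (\<lambda>S. (f S * of_bool (n \<in> s S m)) * of_bool ((t, n, m) \<in> S))
        = Q (t, n, m) * Ex I Q (\<lambda>S. f S * of_bool (n \<in> s S m))"
    proof (rule Ex_indep[OF I_fin, where D="Dlt t"])
      show "(t, n, m) \<in> I" using t that by (simp add: I_def)
      show "(t, n, m) \<notin> Dlt t" by (simp add: Dlt_def)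
      show "f S * of_bool (n \<in> s S m) = f (S \<inter> Dlt t) * of_bool (n \<in> s (S \<inter> Dlt t) m)" for S
        using fdep[of S] sdep[of S] by simp
    qed
    also have "\<dots> = Ex I Q (\<lambda>S. q t n m * (f S * of_bool (n \<in> s S m)))"
      by (simp add: Q_def Ex_scale)
    finally show ?thesis by (simp only: mult.commute)
  qed
  show ?thesis
    unfolding e Ex_scale Ex_sum
    by (intro arg_cong2[where f="(*)"] refl sum.cong) (auto simp: key)
qed

end

definition wfn :: "real \<Rightarrow> nat \<Rightarrow> real" where
  "wfn K' c = 1 / (max (real c) K')\<^sup>2"

definition phf :: "real \<Rightarrow> nat \<Rightarrow> real" where
  "phf K' c = (if real c \<le> K' then (4 * K' - real c) / K'\<^sup>2 else 1 / real c)"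

lemma wf_nonneg: "0 \<le> wfn K' c"
  unfolding wfn_def by simp

lemma wf_mono: "1 \<le> K' \<Longrightarrow> wfn K' (Suc c) \<le> wfn K' c"
  unfolding wfn_def
  by (intro divide_left_mono power_mono) (auto simp: max_def)

lemma wf_big: "K' \<le> real c \<Longrightarrow> wfn K' c = 1 / (real c)\<^sup>2"
  unfolding wfn_def by (simp add: max_def)

lemma phf_nonneg: "1 \<le> K' \<Longrightarrow> 0 \<le> phf K' c"
  unfolding phf_def by auto

lemma phf0: "1 \<le> K' \<Longrightarrow> phf K' 0 = 4 / K'"
  unfolding phf_def by (simp add: power2_eq_square)

lemma phf_step:
  assumes K: "1 \<le> K'"
  shows "wfn K' (Suc c) + phf K' (Suc c) \<le> phf K' c"
proof -
  have Kp: "0 < K'" using K by simp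
  consider "real c + 1 \<le> K'" | "real c \<le> K'" "K' < real c + 1" | "K' < real c" by linarith
  then show ?thesis
  proof cases
    case 1
    then have "wfn K' (Suc c) = 1 / K'\<^sup>2" "phf K' (Suc c) = (4 * K' - (real c + 1)) / K'\<^sup>2"
      "phf K' c = (4 * K' - real c) / K'\<^sup>2"
      unfolding wfn_def phf_def by (auto simp: max_def)
    then show ?thesis by (simp add: diff_divide_distrib add_divide_distrib)
  next
    case 2
    then have e: "wfn K' (Suc c) = 1 / (real c + 1)\<^sup>2" "phf K' (Suc c) = 1 / (real c + 1)"
      "phf K' c = (4 * K' - real c) / K'\<^sup>2"
      unfolding wfn_def phf_def by (auto simp: max_def)
    have c1: "K' \<le> real c + 1" using 2 by simp
    have a1: "1 / (real c + 1) \<le> 1 / K'" using c1 Kp by (intro divide_left_mono) auto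
    have a2: "1 / (real c + 1)\<^sup>2 \<le> 1 / K'" 
    proof -
      have "K' \<le> (real c + 1)\<^sup>2" using c1 K
        by (smt (verit, ccfv_SIG) one_le_numeral power_increasing power_one_right)
      then show ?thesis using Kp by (intro divide_left_mono) auto
    qed
    have a3: "3 / K' \<le> (4 * K' - real c) / K'\<^sup>2"
    proof -
      have "3 * K' \<le> 4 * K' - real c" using 2 by simp
      then have "3 * K' / K'\<^sup>2 \<le> (4 * K' - real c) / K'\<^sup>2" using Kp by (intro divide_right_mono) auto
      then show ?thesis using Kp by (simp add: power2_eq_square)
    qed
    have "1 / K' + 1 / K' \<le> 3 / K'" using Kp by (simp add: add_divide_distrib[symmetric] divide_right_mono)
    then have "1 / (real c + 1)\<^sup>2 + 1 / (real c + 1) \<le> 3 / K'"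
      using a1 a2 by linarith
    then show ?thesis unfolding e using a3 by linarith
  next
    case 3
    then have cp: "1 \<le> real c" using K by simp
    have e: "wfn K' (Suc c) = 1 / (real c + 1)\<^sup>2" "phf K' (Suc c) = 1 / (real c + 1)"
      "phf K' c = 1 / real c"
      using 3 unfolding wfn_def phf_def by (auto simp: max_def)
    have "1 / (real c + 1)\<^sup>2 + 1 / (real c + 1) \<le> 1 / real c"
    proof -
      have "1 / (real c + 1)\<^sup>2 \<le> 1 / real c - 1 / (real c + 1)"
        using cp by (simp add: divide_simps power2_eq_square)
      then show ?thesis by simp
    qed
    then show ?thesis unfolding e .
  qed
qed

context cocs_proc begin

definition selp :: "(nat \<times> nat \<times> nat) set \<Rightarrow> nat \<Rightarrow> nat \<Rightarrow> nat \<Rightarrow> nat \<times> nat \<Rightarrow> bool" where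
  "selp S r n m l \<longleftrightarrow> n \<in> dec S r m \<and> lc r n m = l"

lemma st0: "st S 0 = ((\<lambda>_ _ _. 0), (\<lambda>_ _ _. 0))"
  by (simp add: st_def)

lemma cnt_Suc: "fst (st S (Suc r)) n m l = fst (st S r) n m l + (if selp S (Suc r) n m l then 1 else 0)"
  by (simp add: st_Suc cocs_update_def selp_def)

lemma smm_Suc: "snd (st S (Suc r)) n m l = snd (st S r) n m l
    + (if selp S (Suc r) n m l \<and> (Suc r, n, m) \<in> S then 1 else 0)"
  by (simp add: st_Suc cocs_update_def selp_def conj_assoc)

lemma cnt_sum: "real (fst (st S r) n m l) = (\<Sum>j\<in>{1..r}. of_bool (selp S j n m l))"
proof (induction r)
  case 0
  then show ?case by (simp add: st0)
next
  case (Suc r)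
  then show ?case by (simp add: cnt_Suc sum.cl_ivl_Suc)
qed

lemma selp_dep: "j \<le> r \<Longrightarrow> selp S j n m l = selp (S \<inter> Dlt r) j n m l"
  unfolding selp_def using dec_dep[of j r S] by simp

lemma selp_sub: "selp S j n m l \<Longrightarrow> j \<ge> 1 \<Longrightarrow> m \<in> {1..M} \<Longrightarrow> n \<in> Nset m j"
  unfolding selp_def using dec_sub by blast

lemma selp_out: "selp S j n m l \<Longrightarrow> j \<ge> 1 \<Longrightarrow> m \<in> {1..M}"
  unfolding selp_def using dec_out by fastforce


lemma Ex_zero: "Ex I' q' (\<lambda>S. 0) = 0"
  unfolding Ex_def by simp

lemma inv_step:
  fixes n :: nat and l :: "nat \<times> nat" and K' :: real
  assumes r: "Suc r \<le> T" and m: "m \<in> {1..M}" and K: "1 \<le> K'"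
  defines "Pm \<equiv> \<lambda>S r. (\<Sum>j\<in>{1..r}. of_bool (selp S j n m l) * q j n m)"
  defines "Y \<equiv> \<lambda>S r. (snd (st S r) n m l - Pm S r)\<^sup>2 * wfn K' (fst (st S r) n m l)
                     + phf K' (fst (st S r) n m l) / 4"
  shows "Ex I Q (\<lambda>S. Y S (Suc r)) \<le> Ex I Q (\<lambda>S. Y S r)"
proof -
  define sel where "sel S = selp S (Suc r) n m l" for S
  define c where "c S = fst (st S r) n m l" for S
  define D where "D S = snd (st S r) n m l - Pm S r" for S
  define qq where "qq = q (Suc r) n m"
  define x where "x S = (of_bool ((Suc r, n, m) \<in> S) :: real)" for S
  define G0 where "G0 S = (if sel S then ((D S)\<^sup>2 - 2 * D S * qq + qq\<^sup>2) * wfn K' (Suc (c S)) + phf K' (Suc (c S)) / 4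
                          else Y S r)" for S
  define G1 where "G1 S = (if sel S then (2 * D S + 1 - 2 * qq) * wfn K' (Suc (c S)) else 0)" for S
  have Pm_Suc: "Pm S (Suc r) = Pm S r + of_bool (sel S) * qq" for S
    unfolding Pm_def sel_def qq_def by (simp add: sum.cl_ivl_Suc)
  have decomp: "Y S (Suc r) = G0 S + G1 S * x S" for S
  proof (cases "sel S")
    case True
    have e1: "fst (st S (Suc r)) n m l = Suc (c S)" using True unfolding c_def sel_def by (simp add: cnt_Suc)
    have e2: "snd (st S (Suc r)) n m l - Pm S (Suc r) = D S + x S - qq"
      using True unfolding D_def x_def sel_def by (simp add: smm_Suc Pm_Suc[unfolded sel_def])
    have x01: "x S * x S = x S" unfolding x_def by simp
    have sq: "(D S + x S - qq)\<^sup>2 = (D S)\<^sup>2 - 2 * D S * qq + qq\<^sup>2 + (2 * D S + 1 - 2 * qq) * x S"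
      using x01 by (simp add: power2_eq_square algebra_simps)
    have "Y S (Suc r) = (D S + x S - qq)\<^sup>2 * wfn K' (Suc (c S)) + phf K' (Suc (c S)) / 4"
      by (simp only: Y_def e1 e2)
    also have "\<dots> = G0 S + G1 S * x S"
      unfolding sq using True by (simp add: G0_def G1_def algebra_simps)
    finally show ?thesis .
  next
    case False
    have e1: "fst (st S (Suc r)) n m l = fst (st S r) n m l" using False unfolding sel_def by (simp add: cnt_Suc)
    have e2: "snd (st S (Suc r)) n m l = snd (st S r) n m l" using False unfolding sel_def by (simp add: smm_Suc)
    have e3: "Pm S (Suc r) = Pm S r" using False by (simp add: Pm_Suc)
    show ?thesis unfolding Y_def G0_def G1_def using False e1 e2 e3 by simp
  qed
  have st_d: "st S j = st (S \<inter> Dlt (Suc r)) j" if "j \<le> r" for S j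
    using st_dep[of j "Suc r" S] that by simp
  have Pm_d: "Pm S r = Pm (S \<inter> Dlt (Suc r)) r" for S
    unfolding Pm_def by (intro sum.cong refl) (simp add: selp_dep[of _ "Suc r" S])
  have sel_d: "sel S = sel (S \<inter> Dlt (Suc r))" for S
    unfolding sel_def using selp_dep[of "Suc r" "Suc r" S] by simp
  have c_d: "c S = c (S \<inter> Dlt (Suc r))" for S
    unfolding c_def using st_d[of r S] by simp
  have D_d: "D S = D (S \<inter> Dlt (Suc r))" for S
    unfolding D_def using st_d[of r S] Pm_d[of S] by simp
  have Y_d: "Y S r = Y (S \<inter> Dlt (Suc r)) r" for S
    unfolding Y_def using st_d[of r S] Pm_d[of S] by simp
  have G0_d: "G0 S = G0 (S \<inter> Dlt (Suc r))" for S
    unfolding G0_def using sel_d[of S] c_d[of S] D_d[of S] Y_d[of S] by simp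
  have G1_d: "G1 S = G1 (S \<inter> Dlt (Suc r))" for S
    unfolding G1_def using sel_d[of S] c_d[of S] D_d[of S] by simp
  have indep: "Ex I Q (\<lambda>S. G1 S * x S) = qq * Ex I Q G1"
  proof (cases "n \<in> Nset m (Suc r)")
    case True
    have "Ex I Q (\<lambda>S. G1 S * x S) = Q (Suc r, n, m) * Ex I Q G1"
      unfolding x_def
    proof (rule Ex_indep[OF I_fin, where D="Dlt (Suc r)"])
      show "(Suc r, n, m) \<in> I" using True r m by (simp add: I_def)
      show "(Suc r, n, m) \<notin> Dlt (Suc r)" by (simp add: Dlt_def)
      show "G1 S = G1 (S \<inter> Dlt (Suc r))" for S by (rule G1_d)
    qed
    then show ?thesis by (simp add: Q_def qq_def)
  next
    case False
    have "\<not> sel S" for S using False selp_sub[of S "Suc r" n m l] m unfolding sel_def by auto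
    then have "G1 = (\<lambda>S. 0)" unfolding G1_def by auto
    then show ?thesis by (simp add: Ex_zero)
  qed
  have pw: "G0 S + qq * G1 S \<le> Y S r" for S
  proof (cases "sel S")
    case True
    have w1: "wfn K' (Suc (c S)) \<le> wfn K' (c S)" using K by (rule wf_mono)
    have w0: "0 \<le> wfn K' (Suc (c S))" by (rule wf_nonneg)
    have ph: "wfn K' (Suc (c S)) + phf K' (Suc (c S)) \<le> phf K' (c S)" using K by (rule phf_step)
    have qv: "qq - qq\<^sup>2 \<le> 1 / 4"
    proof -
      have "0 \<le> (qq - 1/2)\<^sup>2" by simp
      then show ?thesis by (simp add: power2_eq_square algebra_simps)
    qed
    have "G0 S + qq * G1 S = ((D S)\<^sup>2 + (qq - qq\<^sup>2)) * wfn K' (Suc (c S)) + phf K' (Suc (c S)) / 4"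
      unfolding G0_def G1_def using True by (simp add: algebra_simps power2_eq_square)
    also have "\<dots> \<le> ((D S)\<^sup>2 + 1 / 4) * wfn K' (Suc (c S)) + phf K' (Suc (c S)) / 4"
      using qv w0 by (intro add_right_mono mult_right_mono) auto
    also have "\<dots> = (D S)\<^sup>2 * wfn K' (Suc (c S)) + (wfn K' (Suc (c S)) + phf K' (Suc (c S))) / 4"
      by (simp add: algebra_simps)
    also have "\<dots> \<le> (D S)\<^sup>2 * wfn K' (c S) + phf K' (c S) / 4"
      using w1 ph by (intro add_mono mult_left_mono divide_right_mono) auto
    also have "\<dots> = Y S r" unfolding Y_def D_def c_def by simp
    finally show ?thesis .
  next
    case False
    then show ?thesis unfolding G0_def G1_def by simp
  qed
  have "Ex I Q (\<lambda>S. Y S (Suc r)) = Ex I Q G0 + Ex I Q (\<lambda>S. G1 S * x S)"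
    unfolding decomp Ex_add ..
  also have "\<dots> = Ex I Q (\<lambda>S. G0 S + qq * G1 S)"
    unfolding indep Ex_add Ex_scale ..
  also have "\<dots> \<le> Ex I Q (\<lambda>S. Y S r)"
    by (rule Ex_mono') (rule pw)
  finally show ?thesis .
qed


lemma core:
  fixes n :: nat and \<beta> Kt a :: real
  assumes t: "t \<in> {1..T}" and m: "m \<in> {1..M}" and beta: "0 \<le> \<beta>"
    and bias: "\<And>j. j \<in> {1..T} \<Longrightarrow> n \<in> Nset m j \<Longrightarrow> lc j n m = lc t n m \<Longrightarrow> \<bar>q j n m - q t n m\<bar> \<le> \<beta>"
    and Kt: "0 \<le> Kt" and a: "0 < a"
  shows "Ex I Q (\<lambda>S. \<bar>q t n m - est_p (st S (t - 1)) n m (lc t n m)\<bar>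
            * of_bool (Kt < real (fst (st S (t - 1)) n m (lc t n m))))
         \<le> \<beta> + 1 / (2 * a * max Kt 1) + a / 2"
proof -
  define l where "l = lc t n m"
  define K' where "K' = max Kt 1"
  have K: "1 \<le> K'" by (simp add: K'_def)
  define Pm where "Pm \<equiv> \<lambda>S r. (\<Sum>j\<in>{1..r}. of_bool (selp S j n m l) * q j n m)"
  define Y where "Y \<equiv> \<lambda>S r. (snd (st S r) n m l - Pm S r)\<^sup>2 * wfn K' (fst (st S r) n m l)
                     + phf K' (fst (st S r) n m l) / 4"
  have inv: "r \<le> T \<Longrightarrow> Ex I Q (\<lambda>S. Y S r) \<le> 1 / K'" for r
  proof (induction r)
    case 0
    have "Y S 0 = 1 / K'" for S using K by (simp add: Y_def Pm_def st0 phf0 wfn_def)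
    then show ?case by (simp add: Ex_const[OF I_fin])
  next
    case (Suc r)
    have "Ex I Q (\<lambda>S. Y S (Suc r)) \<le> Ex I Q (\<lambda>S. Y S r)"
      unfolding Y_def Pm_def by (rule inv_step[OF Suc.prems m K])
    with Suc show ?case by simp
  qed
  define r where "r = t - 1"
  have rT: "r \<le> T" using t unfolding r_def by auto
  have Y0: "0 \<le> Y S r" for S
    unfolding Y_def using phf_nonneg[OF K] wf_nonneg by (intro add_nonneg_nonneg mult_nonneg_nonneg) auto
  have pw: "\<bar>q t n m - est_p (st S r) n m l\<bar> * of_bool (Kt < real (fst (st S r) n m l))
            \<le> \<beta> + Y S r / (2 * a) + a / 2" for S
  proof (cases "Kt < real (fst (st S r) n m l)")
    case False
    then show ?thesis using beta a Y0[of S] by simp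
  next
    case True
    define C where "C = real (fst (st S r) n m l)"
    define Dv where "Dv = snd (st S r) n m l - Pm S r"
    have Cp: "0 < C" using True Kt unfolding C_def by linarith
    then have "1 \<le> C" unfolding C_def by simp
    then have C1: "K' \<le> C" using True unfolding K'_def C_def by simp
    have est: "est_p (st S r) n m l = snd (st S r) n m l / C"
      unfolding est_p_def C_def using Cp C_def by auto
    have Csum: "C = (\<Sum>j\<in>{1..r}. of_bool (selp S j n m l))" unfolding C_def by (rule cnt_sum)
    have biasPm: "\<bar>Pm S r - C * q t n m\<bar> \<le> C * \<beta>"
    proof -
      have eq: "Pm S r - C * q t n m = (\<Sum>j\<in>{1..r}. of_bool (selp S j n m l) * (q j n m - q t n m))"
        unfolding Pm_def Csum by (simp add: sum_distrib_right sum_subtractf right_diff_distrib)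
      have "\<bar>Pm S r - C * q t n m\<bar> \<le> (\<Sum>j\<in>{1..r}. \<bar>of_bool (selp S j n m l) * (q j n m - q t n m)\<bar>)"
        unfolding eq by (rule sum_abs)
      also have "\<dots> \<le> (\<Sum>j\<in>{1..r}. of_bool (selp S j n m l) * \<beta>)"
      proof (rule sum_mono)
        fix j assume j: "j \<in> {1..r}"
        show "\<bar>of_bool (selp S j n m l) * (q j n m - q t n m)\<bar> \<le> of_bool (selp S j n m l) * \<beta>"
        proof (cases "selp S j n m l")
          case True
          have "n \<in> Nset m j" using selp_sub[OF True] j m by simp
          moreover have "lc j n m = lc t n m" using True unfolding selp_def l_def by simp
          moreover have "j \<in> {1..T}" using j rT by simp
          ultimately show ?thesis using bias True by simp
        qed simp
      qed
      also have "\<dots> = C * \<beta>" unfolding Csum by (simp add: sum_distrib_right)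
      finally show ?thesis .
    qed
    have b1: "\<bar>Pm S r / C - q t n m\<bar> \<le> \<beta>"
    proof -
      have "Pm S r / C - q t n m = (Pm S r - C * q t n m) / C" using Cp by (simp add: diff_divide_distrib)
      then have "\<bar>Pm S r / C - q t n m\<bar> = \<bar>Pm S r - C * q t n m\<bar> / C" using Cp by simp
      also have "\<dots> \<le> C * \<beta> / C" using biasPm Cp by (intro divide_right_mono) auto
      finally show ?thesis using Cp by simp
    qed
    have e1: "q t n m - snd (st S r) n m l / C = - (Dv / C) - (Pm S r / C - q t n m)"
      unfolding Dv_def by (simp add: diff_divide_distrib)
    have b2: "\<bar>q t n m - snd (st S r) n m l / C\<bar> \<le> \<bar>Dv / C\<bar> + \<beta>"
      unfolding e1 using b1 by linarith
    have amgm: "\<bar>Dv / C\<bar> \<le> (Dv / C)\<^sup>2 / (2 * a) + a / 2"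
    proof -
      have "0 \<le> (\<bar>Dv / C\<bar> - a)\<^sup>2" by simp
      then have "2 * a * \<bar>Dv / C\<bar> \<le> (Dv / C)\<^sup>2 + a\<^sup>2" by (simp add: power2_eq_square algebra_simps)
      then have "(2 * a * \<bar>Dv / C\<bar>) / (2 * a) \<le> ((Dv / C)\<^sup>2 + a\<^sup>2) / (2 * a)"
        using a by (intro divide_right_mono) auto
      moreover have "a\<^sup>2 / (2 * a) = a / 2" using a by (simp add: power2_eq_square)
      ultimately show ?thesis using a by (simp add: add_divide_distrib)
    qed
    have yb: "(Dv / C)\<^sup>2 \<le> Y S r"
    proof -
      have "(Dv / C)\<^sup>2 = Dv\<^sup>2 * wfn K' (fst (st S r) n m l)"
        using wf_big[of K' "fst (st S r) n m l"] C1 unfolding C_def by (simp add: power_divide)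
      then show ?thesis unfolding Y_def Dv_def using phf_nonneg[OF K] by simp
    qed
    have "(Dv / C)\<^sup>2 / (2 * a) \<le> Y S r / (2 * a)" using yb a by (intro divide_right_mono) auto
    moreover have "\<bar>q t n m - snd (st S r) n m l / C\<bar> * of_bool (Kt < real (fst (st S r) n m l))
        = \<bar>q t n m - snd (st S r) n m l / C\<bar>" using True by simp
    ultimately show ?thesis using b2 amgm unfolding est by linarith
  qed
  have "Ex I Q (\<lambda>S. \<bar>q t n m - est_p (st S r) n m l\<bar> * of_bool (Kt < real (fst (st S r) n m l)))
        \<le> Ex I Q (\<lambda>S. \<beta> + Y S r / (2 * a) + a / 2)"
    by (rule Ex_mono') (rule pw)
  also have "\<dots> = \<beta> + Ex I Q (\<lambda>S. Y S r) / (2 * a) + a / 2"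
  proof -
    have "Ex I Q (\<lambda>S. Y S r / (2 * a)) = Ex I Q (\<lambda>S. Y S r) / (2 * a)"
      using Ex_scale[of I Q "1 / (2 * a)" "\<lambda>S. Y S r"] by simp
    then show ?thesis unfolding Ex_add by (simp add: Ex_const[OF I_fin])
  qed
  also have "\<dots> \<le> \<beta> + (1 / K') / (2 * a) + a / 2"
  proof -
    have "Ex I Q (\<lambda>S. Y S r) / (2 * a) \<le> (1 / K') / (2 * a)"
      using inv[OF rT] a by (intro divide_right_mono) auto
    then show ?thesis by linarith
  qed
  also have "\<dots> = \<beta> + 1 / (2 * a * max Kt 1) + a / 2" by (simp add: K'_def)
  finally show ?thesis unfolding r_def l_def .
qed


lemma util_diff: "util M s v - util M s w = (1 / real M) * (\<Sum>m\<in>{1..M}. \<Sum>n\<in>s m. v n m - w n m)"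
  unfolding util_def by (simp add: sum_subtractf right_diff_distrib)

lemma pw_regret:
  assumes t: "t \<in> {1..T}" and sf: "feasible M Nset cost B t so"
  shows "of_bool (\<not> exploration_round M Nset K lc t (st S (t - 1)))
           * (util M so (\<lambda>n m. q t n m) - util M (dec S t) (\<lambda>n m. q t n m))
         \<le> (1 / real M) * (\<Sum>m\<in>{1..M}. \<Sum>n\<in>Nset m t.
              \<bar>q t n m - est_p (st S (t - 1)) n m (lc t n m)\<bar>
              * of_bool (K t < real (fst (st S (t - 1)) n m (lc t n m))))"
    (is "?L \<le> (1 / real M) * ?R")
proof (cases "exploration_round M Nset K lc t (st S (t - 1))")
  case True
  have "0 \<le> ?R" by (intro sum_nonneg) auto
  then show ?thesis using True by simp
next
  case False
  define \<sigma> where "\<sigma> = st S (t - 1)"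
  define est where "est = (\<lambda>n m. est_p \<sigma> n m (lc t n m))"
  define qv where "qv = (\<lambda>n m. q t n m)"
  have t1: "t \<ge> 1" using t by simp
  have ex: "util M so est \<le> util M (dec S t) est"
    unfolding est_def dec_def \<sigma>_def using pick_exploit[OF t1 False[unfolded \<sigma>_def[symmetric]] sf] 
    by (simp add: \<sigma>_def)
  have sosub: "so m \<subseteq> Nset m t" if "m \<in> {1..M}" for m using sf that unfolding feasible_def by blast
  have ind: "K t < real (fst \<sigma> n m (lc t n m))" if "m \<in> {1..M}" "n \<in> Nset m t" for n m
    using False that unfolding exploration_round_def under_explored_def \<sigma>_def by (meson not_le)
  have "util M so qv - util M (dec S t) qv \<le> (util M so qv - util M so est) - (util M (dec S t) qv - util M (dec S t) est)"
    using ex by simp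
  also have "\<dots> = (1 / real M) * (\<Sum>m\<in>{1..M}. (\<Sum>n\<in>so m. qv n m - est n m) - (\<Sum>n\<in>dec S t m. qv n m - est n m))"
    unfolding util_diff by (simp add: sum_subtractf right_diff_distrib)
  also have "\<dots> \<le> (1 / real M) * (\<Sum>m\<in>{1..M}. \<Sum>n\<in>Nset m t. \<bar>qv n m - est n m\<bar>)"
  proof (intro mult_left_mono sum_mono)
    fix m assume m: "m \<in> {1..M}"
    show "(\<Sum>n\<in>so m. qv n m - est n m) - (\<Sum>n\<in>dec S t m. qv n m - est n m) \<le> (\<Sum>n\<in>Nset m t. \<bar>qv n m - est n m\<bar>)"
      by (rule symdiff_le[OF Nset_fin sosub[OF m] dec_sub[OF t1 m]])
  qed simp
  also have "\<dots> = (1 / real M) * ?R"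
    unfolding qv_def est_def \<sigma>_def using ind[unfolded \<sigma>_def]
    by (intro arg_cong2[where f="(*)"] refl sum.cong) auto
  finally show ?thesis using False unfolding qv_def by simp
qed

lemma round_bound:
  fixes \<beta> a :: real
  assumes t: "t \<in> {1..T}" and beta: "0 \<le> \<beta>"
    and bias: "\<And>j n m. j \<in> {1..T} \<Longrightarrow> m \<in> {1..M} \<Longrightarrow> n \<in> Nset m j \<Longrightarrow> n \<in> Nset m t
                 \<Longrightarrow> lc j n m = lc t n m \<Longrightarrow> \<bar>q j n m - q t n m\<bar> \<le> \<beta>"
    and Kt: "0 \<le> K t" and a: "0 < a"
    and sf: "feasible M Nset cost B t so" and M1: "M \<ge> 1"
  shows "Ex I Q (\<lambda>S. if exploration_round M Nset K lc t (st S (t - 1)) then 0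
           else util M so (\<lambda>n m. of_bool ((t, n, m) \<in> S)) - util M (dec S t) (\<lambda>n m. of_bool ((t, n, m) \<in> S)))
         \<le> real N * (\<beta> + 1 / (2 * a * max (K t) 1) + a / 2)"
proof -
  define bnd where "bnd = \<beta> + 1 / (2 * a * max (K t) 1) + a / 2"
  have bnd0: "0 \<le> bnd" unfolding bnd_def using beta a by (intro add_nonneg_nonneg) auto
  have t1: "t \<ge> 1" using t by simp
  define f where "f S = (of_bool (\<not> exploration_round M Nset K lc t (st S (t - 1))) :: real)" for S
  define Xv where "Xv S = (\<lambda>n m. of_bool ((t, n, m) \<in> S) :: real)" for S :: "(nat \<times> nat \<times> nat) set"
  have fdep: "f S = f (S \<inter> Dlt t)" for S
    unfolding f_def using st_dep[of "t - 1" t S] t1 by simp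
  have sosub: "so m \<subseteq> Nset m t" if "m \<in> {1..M}" for m using sf that unfolding feasible_def by blast
  have e1: "Ex I Q (\<lambda>S. f S * util M so (Xv S)) = Ex I Q (\<lambda>S. f S * util M so (\<lambda>n m. q t n m))"
    unfolding Xv_def by (rule Ex_util[where f=f and s="\<lambda>_. so", OF t fdep]) (auto simp: sosub)
  have e2: "Ex I Q (\<lambda>S. f S * util M (dec S t) (Xv S)) = Ex I Q (\<lambda>S. f S * util M (dec S t) (\<lambda>n m. q t n m))"
    unfolding Xv_def
    by (rule Ex_util[where f=f and s="\<lambda>S. dec S t", OF t fdep]) (auto simp: dec_sub[OF t1] intro: dec_dep)
  have "Ex I Q (\<lambda>S. if exploration_round M Nset K lc t (st S (t - 1)) then 0
           else util M so (Xv S) - util M (dec S t) (Xv S))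
      = Ex I Q (\<lambda>S. f S * util M so (Xv S) - f S * util M (dec S t) (Xv S))"
    unfolding f_def by (intro arg_cong[where f="Ex I Q"] ext) simp
  also have "\<dots> = Ex I Q (\<lambda>S. f S * (util M so (\<lambda>n m. q t n m) - util M (dec S t) (\<lambda>n m. q t n m)))"
    unfolding Ex_diff e1 e2 by (simp add: right_diff_distrib Ex_diff[symmetric])
  also have "\<dots> \<le> Ex I Q (\<lambda>S. (1 / real M) * (\<Sum>m\<in>{1..M}. \<Sum>n\<in>Nset m t.
              \<bar>q t n m - est_p (st S (t - 1)) n m (lc t n m)\<bar>
              * of_bool (K t < real (fst (st S (t - 1)) n m (lc t n m)))))"
    unfolding f_def by (rule Ex_mono') (rule pw_regret[OF t sf])
  also have "\<dots> = (1 / real M) * (\<Sum>m\<in>{1..M}. \<Sum>n\<in>Nset m t. Ex I Q (\<lambda>S.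
              \<bar>q t n m - est_p (st S (t - 1)) n m (lc t n m)\<bar>
              * of_bool (K t < real (fst (st S (t - 1)) n m (lc t n m)))))"
    unfolding Ex_scale Ex_sum ..
  also have "\<dots> \<le> (1 / real M) * (\<Sum>m\<in>{1..M}. \<Sum>n\<in>Nset m t. bnd)"
  proof (intro mult_left_mono sum_mono)
    fix m n assume m: "m \<in> {1..M}" and n: "n \<in> Nset m t"
    show "Ex I Q (\<lambda>S. \<bar>q t n m - est_p (st S (t - 1)) n m (lc t n m)\<bar>
              * of_bool (K t < real (fst (st S (t - 1)) n m (lc t n m)))) \<le> bnd"
      unfolding bnd_def
      by (rule core[OF t m beta _ Kt a]) (rule bias[OF _ m _ n]; simp)
  qed simp
  also have "\<dots> = (1 / real M) * (\<Sum>m\<in>{1..M}. real (card (Nset m t))) * bnd"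
    by (simp add: sum_distrib_right)
  also have "\<dots> \<le> (1 / real M) * (\<Sum>m\<in>{1..M}. real N) * bnd"
  proof (intro mult_right_mono mult_left_mono sum_mono bnd0)
    fix m assume "m \<in> {1..M}"
    have "card (Nset m t) \<le> card {1..N}" by (rule card_mono) (use Nset_sub in auto)
    then show "real (card (Nset m t)) \<le> real N" by simp
  qed simp
  also have "\<dots> = real N * bnd" using M1 by simp
  finally show ?thesis unfolding Xv_def bnd_def .
qed

end

lemma util_cong_sub:
  assumes "\<And>m n. m \<in> {1..M} \<Longrightarrow> n \<in> s m \<Longrightarrow> v n m = w n m"
  shows "util M s v = util M s w"
  unfolding util_def using assms by (intro arg_cong2[where f="(*)"] refl sum.cong) auto

lemma util_empty:
  assumes "\<And>m. m \<in> {1..M} \<Longrightarrow> s m = {}"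
  shows "util M s v = 0"
  unfolding util_def using assms by simp

lemma tz_le:
  fixes t :: nat and z :: real
  assumes t: "t \<ge> 1" and z: "0 < z"
  shows "real t powr z \<le> 4 * max (real t powr z * ln (real t)) 1"
proof (cases "t = 1")
  case True
  then show ?thesis by simp
next
  case False
  then have t2: "real t \<ge> 2" using t by simp
  have "ln 2 \<le> ln (real t)" using t2 by simp
  moreover have "2/3 \<le> ln (2::real)" by (rule ln2_ge_two_thirds)
  ultimately have l: "1/4 \<le> ln (real t)" by linarith
  have p: "0 \<le> real t powr z" by simp
  have "real t powr z = 4 * (real t powr z * (1/4))" by simp
  also have "\<dots> \<le> 4 * (real t powr z * ln (real t))"
    using l p by (intro mult_left_mono) auto
  also have "\<dots> \<le> 4 * max (real t powr z * ln (real t)) 1" by simp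
  finally show ?thesis .
qed

lemma ab_bound:
  fixes t :: nat and z K' :: real
  assumes t: "t \<ge> 1" and K: "1 \<le> K'" and tz: "real t powr z \<le> 4 * K'"
  shows "1 / (2 * (2 * real t powr (- z / 2)) * K') + 2 * real t powr (- z / 2) / 2 \<le> 2 * real t powr (- z / 2)"
proof -
  define u where "u = real t powr (- z / 2)"
  have up: "0 < u" unfolding u_def using t by simp
  have uu: "real t powr z * (u * u) = 1"
    unfolding u_def using t by (simp add: powr_add[symmetric])
  have "1 \<le> 4 * K' * (u * u)"
  proof -
    have "real t powr z * (u * u) \<le> 4 * K' * (u * u)" using tz up by (intro mult_right_mono) auto
    then show ?thesis using uu by simp
  qed
  then have "1 / (4 * u * K') \<le> u" using up K by (simp add: divide_le_eq algebra_simps)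
  then show ?thesis unfolding u_def[symmetric] by (simp add: algebra_simps)
qed

theorem lemma2:
  fixes N M T :: nat
    and B L \<alpha> z \<gamma> A \<theta> cmin :: real
    and Nset :: "nat \<Rightarrow> nat \<Rightarrow> nat set"          \<comment> \<open>Nset m t = N_m^t\<close>
    and y :: "nat \<Rightarrow> nat \<Rightarrow> real"                 \<comment> \<open>y n t = y_n^t\<close>
    and c :: "nat \<Rightarrow> real \<Rightarrow> real"                 \<comment> \<open>c n = c_n\<close>
    and \<phi> :: "nat \<Rightarrow> nat \<Rightarrow> nat \<Rightarrow> real \<times> real"     \<comment> \<open>\<phi> t n m = \<phi>_{n,m}^t\<close>
    and p :: "nat \<Rightarrow> nat \<Rightarrow> real \<times> real \<Rightarrow> real"     \<comment> \<open>p n m = p_{n,m}\<close>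
    and P :: "'w measure"
    and X :: "nat \<Rightarrow> nat \<Rightarrow> nat \<Rightarrow> 'w \<Rightarrow> bool"     \<comment> \<open>X t n m = X_{n,m}^t\<close>
    and pick :: "nat \<Rightarrow> cocs_state \<Rightarrow> decision"
    and sopt :: "nat \<Rightarrow> decision"
    and H :: "nat \<Rightarrow> real"
  defines "cost \<equiv> (\<lambda>n t. c n (y n t))"
    and "hT \<equiv> nat \<lceil>real T powr \<gamma>\<rceil>"
    and "K \<equiv> (\<lambda>t. real t powr z * ln (real t))"
    and "lc \<equiv> (\<lambda>t n m. cell (nat \<lceil>real T powr \<gamma>\<rceil>) (\<phi> t n m))"
  assumes N_pos: "N \<ge> 1" and M_pos: "M \<ge> 1" and T_pos: "T \<ge> 1"
    and B_pos: "B > 0"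
    and Nset_sub: "\<And>m t. Nset m t \<subseteq> {1..N}"
    and c_pos: "\<And>n v. c n v > 0"
    and c_mono: "\<And>n. mono (c n)"
    and cmin_def: "cmin = Min {cost n t | n t. n \<in> {1..N} \<and> t \<in> {1..T}}"
    and ctx: "\<And>t n m. t \<ge> 1 \<Longrightarrow> m \<in> {1..M} \<Longrightarrow> n \<in> Nset m t \<Longrightarrow>
                \<phi> t n m \<in> {0..1} \<times> {0..1}"
    and p_range: "\<And>n m v. n \<in> {1..N} \<Longrightarrow> m \<in> {1..M} \<Longrightarrow> p n m v \<in> {0..1}"
    and L_pos: "L > 0" and \<alpha>_pos: "\<alpha> > 0"
    and hoelder: "\<And>n m v w. n \<in> {1..N} \<Longrightarrow> m \<in> {1..M} \<Longrightarrow>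
                v \<in> {0..1} \<times> {0..1} \<Longrightarrow> w \<in> {0..1} \<times> {0..1} \<Longrightarrow>
                \<bar>p n m v - p n m w\<bar> \<le> L * norm (v - w) powr \<alpha>"
    and P_prob: "prob_space P"
    and X_meas: "\<And>t n m. t \<ge> 1 \<Longrightarrow> m \<in> {1..M} \<Longrightarrow> n \<in> Nset m t \<Longrightarrow>
                X t n m \<in> measurable P (count_space UNIV)"
    and X_bernoulli: "\<And>t n m. t \<ge> 1 \<Longrightarrow> m \<in> {1..M} \<Longrightarrow> n \<in> Nset m t \<Longrightarrow>
                measure P {\<omega> \<in> space P. X t n m \<omega>} = p n m (\<phi> t n m)"
    and X_indep: "prob_space.indep_vars P (\<lambda>_. count_space UNIV) (\<lambda>(t, n, m). X t n m)
                {(t, n, m). t \<ge> 1 \<and> m \<in> {1..M} \<and> n \<in> Nset m t}"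
    and z_bounds: "0 < z" "z < 1"
    and \<gamma>_bounds: "0 < \<gamma>" "\<gamma> < 1/2"
    and policy: "cocs_rule M Nset cost B K lc pick"
    and sopt_feasible: "\<And>t. t \<in> {1..T} \<Longrightarrow> feasible M Nset cost B t (sopt t)"
    and sopt_opt: "\<And>t s. t \<in> {1..T} \<Longrightarrow> feasible M Nset cost B t s \<Longrightarrow>
                util M s (\<lambda>n m. p n m (\<phi> t n m)) \<le> util M (sopt t) (\<lambda>n m. p n m (\<phi> t n m))"
    and H_lower: "\<And>t. t \<in> {1..T} \<Longrightarrow>
                H t > real N * real M * B / cmin * real t powr (- z / 2)"
    and A_pos: "A > 0" and \<theta>_bounds: "-1 < \<theta>" "\<theta> < 0"
    and H_A: "\<And>t. t \<in> {1..T} \<Longrightarrow>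
                2 * H t + 2 * real N * real M * B / cmin * L * 2 powr (\<alpha> / 2) * real hT powr (- \<alpha>)
                  \<le> A * real t powr \<theta>"
  shows "integral\<^sup>L P (R_exploit M Nset K lc pick sopt X T)
         \<le> real N * real M * B / cmin * (\<Sum>k = 1..nat \<lfloor>B / cmin\<rfloor>. real (N choose k)) * (pi\<^sup>2 / 3)
           + 3 * real N * real M * B / cmin * L * 2 powr (\<alpha> / 2) * real T powr (1 - \<gamma> * \<alpha>)
           + A / (1 + \<theta>) * real T powr (1 + \<theta>)"

proof -
  define q where "q = (\<lambda>t n m. p n m (\<phi> t n m))"
  have q_range: "0 \<le> q t n m \<and> q t n m \<le> 1" if "t \<in> {1..T}" "m \<in> {1..M}" "n \<in> Nset m t" for t n m
  proof -
    have "n \<in> {1..N}" using Nset_sub that(3) by blast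
    then show ?thesis using p_range[of n m "\<phi> t n m"] that(2) unfolding q_def by auto
  qed
  interpret cp: cocs_proc M N T Nset cost B K lc pick q
    by unfold_locales (use policy Nset_sub q_range in auto)
  define Xv where "Xv = (\<lambda>i. case i of (t, n, m) \<Rightarrow> X t n m)"
  define regS where "regS S t = (if exploration_round M Nset K lc t (cp.st S (t - 1)) then 0
      else util M (sopt t) (\<lambda>n m. of_bool ((t, n, m) \<in> S)) - util M (cp.dec S t) (\<lambda>n m. of_bool ((t, n, m) \<in> S)))"
    for S t
  have sopt_sub: "sopt t m \<subseteq> Nset m t" if "t \<in> {1..T}" "m \<in> {1..M}" for t m
    using sopt_feasible[OF that(1)] that(2) unfolding feasible_def by blast
  have Rp: "R_exploit M Nset K lc pick sopt X T \<omega> = (\<Sum>t\<in>{1..T}. regS {i \<in> cp.I. Xv i \<omega>} t)" for \<omega>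
  proof -
    define S where "S = {i \<in> cp.I. Xv i \<omega>}"
    have stq: "cocs_st pick lc X \<omega> (t - 1) = cp.st S (t - 1)" if t: "t \<in> {1..T}" for t
      unfolding cp.st_def
    proof (rule cp.st_cong)
      fix t' n m assume "t' \<in> {1..t - 1}" "m \<in> {1..M}" "n \<in> Nset m t'"
      then show "X t' n m \<omega> = cp.Xp S t' n m ()"
        using t unfolding cp.Xp_def S_def cp.I_def Xv_def by auto
    qed
    have termeq: "(if exploration_round M Nset K lc t (cocs_st pick lc X \<omega> (t - 1)) then 0
        else util M (sopt t) (\<lambda>n m. of_bool (X t n m \<omega>)) - util M (cocs_dec pick lc X \<omega> t) (\<lambda>n m. of_bool (X t n m \<omega>)))
        = regS S t" if t: "t \<in> {1..T}" for t
    proof -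
      have dec: "cocs_dec pick lc X \<omega> t = cp.dec S t"
        unfolding cocs_dec_def cp.dec_def stq[OF t] ..
      have xe: "of_bool (X t n m \<omega>) = (of_bool ((t, n, m) \<in> S) :: real)" if "m \<in> {1..M}" "n \<in> Nset m t" for n m
        using t that unfolding S_def cp.I_def Xv_def by auto
      have u1: "util M (sopt t) (\<lambda>n m. of_bool (X t n m \<omega>)) = util M (sopt t) (\<lambda>n m. of_bool ((t, n, m) \<in> S))"
        by (rule util_cong_sub) (use xe sopt_sub[OF t] in blast)
      have u2: "util M (cp.dec S t) (\<lambda>n m. of_bool (X t n m \<omega>)) = util M (cp.dec S t) (\<lambda>n m. of_bool ((t, n, m) \<in> S))"
        by (rule util_cong_sub) (use xe cp.dec_sub[of t] t in force)
      show ?thesis unfolding regS_def stq[OF t] dec u1 u2 ..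
    qed
    show ?thesis unfolding R_exploit_def S_def[symmetric] by (rule sum.cong[OF refl]) (rule termeq)
  qed
  have integ: "integral\<^sup>L P (R_exploit M Nset K lc pick sopt X T) = Ex cp.I cp.Q (\<lambda>S. \<Sum>t\<in>{1..T}. regS S t)"
    unfolding Rp
  proof (rule bridge[OF P_prob])
    show "prob_space.indep_vars P (\<lambda>_. count_space UNIV) Xv {(t, n, m). t \<ge> 1 \<and> m \<in> {1..M} \<and> n \<in> Nset m t}"
      using X_indep unfolding Xv_def by (simp add: case_prod_unfold)
    show "cp.I \<subseteq> {(t, n, m). t \<ge> 1 \<and> m \<in> {1..M} \<and> n \<in> Nset m t}" unfolding cp.I_def by auto
    show "finite cp.I" by (rule cp.I_fin)
    show "Xv i \<in> measurable P (count_space UNIV)" if "i \<in> cp.I" for i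
      using that X_meas unfolding cp.I_def Xv_def by auto
    show "measure P {\<omega> \<in> space P. Xv i \<omega>} = cp.Q i" if "i \<in> cp.I" for i
    proof -
      obtain t n m where i: "i = (t, n, m)" by (cases i) auto
      have "measure P {\<omega> \<in> space P. X t n m \<omega>} = q t n m"
        using that X_bernoulli unfolding i cp.I_def q_def by auto
      then show ?thesis unfolding i Xv_def cp.Q_def by simp
    qed
  qed
  define CS where "CS = {cost n t | n t. n \<in> {1..N} \<and> t \<in> {1..T}}"
  have CSeq: "CS = (\<lambda>(n, t). cost n t) ` ({1..N} \<times> {1..T})" unfolding CS_def by force
  have CSfin: "finite CS" unfolding CSeq by simp
  have CSne: "CS \<noteq> {}" unfolding CSeq using N_pos T_pos by auto
  have cost_pos: "0 < cost n t" for n t unfolding cost_def using c_pos by simp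
  have cminpos: "0 < cmin"
  proof -
    have "cmin \<in> CS" unfolding cmin_def CS_def[symmetric] using CSfin CSne by (rule Min_in)
    then show ?thesis unfolding CS_def using cost_pos by auto
  qed
  have cmin_le: "cmin \<le> cost n t" if "n \<in> {1..N}" "t \<in> {1..T}" for n t
    unfolding cmin_def CS_def[symmetric] using CSfin that unfolding CS_def by (intro Min_le) auto
  have round: "Ex cp.I cp.Q (\<lambda>S. regS S t) \<le> A * real t powr \<theta>" if t: "t \<in> {1..T}" for t
  proof (cases "B < cmin")
    case True
    have nosel: "s m = {}" if sf: "feasible M Nset cost B t s" and m: "m \<in> {1..M}" for s m
    proof (rule ccontr)
      assume "s m \<noteq> {}"
      then obtain n where n: "n \<in> s m" by auto
      have sub: "s m \<subseteq> Nset m t" using sf m unfolding feasible_def by blast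
      have fin: "finite (s m)" using sub cp.Nset_fin finite_subset by blast
      have "cost n t \<le> (\<Sum>k\<in>s m. cost k t)"
        using fin n cost_pos by (intro member_le_sum) (auto intro: less_imp_le)
      also have "\<dots> \<le> B" using sf m unfolding feasible_def by blast
      also have "\<dots> < cmin" by (rule True)
      also have "cmin \<le> cost n t" using cmin_le[of n t] n sub Nset_sub t by blast
      finally show False by simp
    qed
    have "regS S t = 0" for S
    proof -
      have t1: "t \<ge> 1" using t by simp
      have "util M (sopt t) v = 0" for v by (rule util_empty) (rule nosel[OF sopt_feasible[OF t]])
      moreover have "util M (cp.dec S t) v = 0" for v
        unfolding cp.dec_def by (rule util_empty) (rule nosel[OF cp.pick_feasible[OF t1]])
      ultimately show ?thesis unfolding regS_def by simp
    qed
    then have "Ex cp.I cp.Q (\<lambda>S. regS S t) = 0" by (simp add: cp.Ex_zero)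
    then show ?thesis using A_pos by simp
  next
    case False
    then have Bc: "cmin \<le> B" by simp
    have t1: "t \<ge> 1" using t by simp
    have hT1: "1 \<le> hT"
    proof -
      have "1 \<le> real T powr \<gamma>" using T_pos \<gamma>_bounds by (intro ge_one_powr_ge_zero) auto
      then have "1 \<le> \<lceil>real T powr \<gamma>\<rceil>" by linarith
      then show ?thesis unfolding hT_def by linarith
    qed
    define \<beta> where "\<beta> = L * 2 powr (\<alpha> / 2) * real hT powr (- \<alpha>)"
    have beta0: "0 \<le> \<beta>" unfolding \<beta>_def using L_pos by simp
    define u where "u = real t powr (- z / 2)"
    have u0: "0 \<le> u" unfolding u_def by simp
    define a where "a = 2 * u"
    have a0: "0 < a" unfolding a_def u_def using t1 by simp
    have Kt0: "0 \<le> K t" unfolding K_def using t1 by simp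
    have bias: "\<bar>q j n m - q t n m\<bar> \<le> \<beta>"
      if j: "j \<in> {1..T}" and m: "m \<in> {1..M}" and nj: "n \<in> Nset m j" and nt: "n \<in> Nset m t"
        and eq: "lc j n m = lc t n m" for j n m
    proof -
      have n: "n \<in> {1..N}" using nj Nset_sub by blast
      have vj: "\<phi> j n m \<in> {0..1} \<times> {0..1}" using ctx[of j m n] j m nj by simp
      have vt: "\<phi> t n m \<in> {0..1} \<times> {0..1}" using ctx[of t m n] t m nt by simp
      have ce: "cell hT (\<phi> j n m) = cell hT (\<phi> t n m)" using eq unfolding lc_def hT_def by simp
      have nb: "norm (\<phi> j n m - \<phi> t n m) \<le> sqrt 2 / real hT"
        by (rule cell_close[OF hT1 vj vt ce])
      have "\<bar>q j n m - q t n m\<bar> \<le> L * norm (\<phi> j n m - \<phi> t n m) powr \<alpha>"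
        unfolding q_def by (rule hoelder[OF n m vj vt])
      also have "\<dots> \<le> L * (sqrt 2 / real hT) powr \<alpha>"
        using nb \<alpha>_pos L_pos by (intro mult_left_mono powr_mono2) auto
      also have "(sqrt 2 / real hT) powr \<alpha> = 2 powr (\<alpha> / 2) * real hT powr (- \<alpha>)"
      proof -
        have "sqrt 2 = 2 powr (1/2)" by (simp add: powr_half_sqrt)
        then have "sqrt 2 powr \<alpha> = 2 powr (\<alpha> / 2)" by (simp add: powr_powr)
        moreover have "real hT powr (- \<alpha>) = 1 / real hT powr \<alpha>" by (simp add: powr_minus_divide)
        ultimately show ?thesis by (simp add: powr_divide)
      qed
      finally show ?thesis unfolding \<beta>_def by (simp add: mult.assoc)
    qed
    have rb: "Ex cp.I cp.Q (\<lambda>S. regS S t) \<le> real N * (\<beta> + 1 / (2 * a * max (K t) 1) + a / 2)"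
      unfolding regS_def
      by (rule cp.round_bound[OF t beta0 _ Kt0 a0 sopt_feasible[OF t] M_pos]) (rule bias; assumption)
    have ab: "1 / (2 * a * max (K t) 1) + a / 2 \<le> 2 * u"
    proof -
      have "real t powr z \<le> 4 * max (K t) 1" unfolding K_def using tz_le[OF t1 z_bounds(1)] by simp
      from ab_bound[OF t1 _ this] show ?thesis unfolding a_def u_def by (simp add: mult.assoc)
    qed
    define c where "c = real N * real M * B / cmin"
    have cN: "real N \<le> c"
    proof -
      have "1 \<le> B / cmin" using Bc cminpos by simp
      moreover have "1 \<le> real M" using M_pos by simp
      ultimately have "1 * 1 \<le> real M * (B / cmin)" by (intro mult_mono) auto
      then have "1 \<le> real M * (B / cmin)" by simp
      then have "real N * 1 \<le> real N * (real M * (B / cmin))" by (intro mult_left_mono) auto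
      then show ?thesis unfolding c_def by simp
    qed
    have Hl: "c * u < H t" using H_lower[OF t] unfolding c_def u_def by simp
    have HA: "2 * H t + 2 * c * \<beta> \<le> A * real t powr \<theta>"
      using H_A[OF t] unfolding c_def \<beta>_def by (simp add: mult.assoc)
    have "Ex cp.I cp.Q (\<lambda>S. regS S t) \<le> real N * (\<beta> + 2 * u)"
      using rb ab by (smt (verit) mult_left_mono of_nat_0_le_iff)
    also have "\<dots> = real N * \<beta> + 2 * (real N * u)" by (simp add: algebra_simps)
    also have "\<dots> \<le> c * \<beta> + 2 * (c * u)"
      using cN beta0 u0 by (intro add_mono mult_right_mono mult_left_mono) auto
    also have "\<dots> \<le> A * real t powr \<theta>"
    proof -
      have "0 \<le> c" using cN by simp
      then have "0 \<le> c * \<beta>" using beta0 by simp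
      then show ?thesis using Hl HA by linarith
    qed
    finally show ?thesis .
  qed
  have "integral\<^sup>L P (R_exploit M Nset K lc pick sopt X T) = (\<Sum>t\<in>{1..T}. Ex cp.I cp.Q (\<lambda>S. regS S t))"
    unfolding integ Ex_sum ..
  also have "\<dots> \<le> (\<Sum>t\<in>{1..T}. A * real t powr \<theta>)"
    by (rule sum_mono) (rule round)
  also have "\<dots> = A * (\<Sum>t\<in>{1..T}. real t powr \<theta>)" by (simp add: sum_distrib_left)
  also have "\<dots> \<le> A * (real T powr (1 + \<theta>) / (1 + \<theta>))"
    using sum_powr_le[OF \<theta>_bounds, of T] A_pos by (intro mult_left_mono) auto
  also have "\<dots> = A / (1 + \<theta>) * real T powr (1 + \<theta>)" by simp
  finally have main: "integral\<^sup>L P (R_exploit M Nset K lc pick sopt X T) \<le> A / (1 + \<theta>) * real T powr (1 + \<theta>)" .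
  have t1: "0 \<le> real N * real M * B / cmin * (\<Sum>k = 1..nat \<lfloor>B / cmin\<rfloor>. real (N choose k)) * (pi\<^sup>2 / 3)"
    using B_pos cminpos by (intro mult_nonneg_nonneg divide_nonneg_nonneg sum_nonneg) auto
  have t2: "0 \<le> 3 * real N * real M * B / cmin * L * 2 powr (\<alpha> / 2) * real T powr (1 - \<gamma> * \<alpha>)"
    using B_pos cminpos L_pos by (intro mult_nonneg_nonneg divide_nonneg_nonneg) auto
  show ?thesis using main t1 t2 by linarith
qed

end
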